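(* The abelian category $\mathcal R$ of rational $\mathfrak{sl}(2)$-modules decomposes as the $\mathrm{Hom}$-orthogonal direct sum of the abelian subcategories of generalized rational Casimir modules: $$\mathcal R=\bigoplus_{\mu\in\mathbb{C}}\mathcal{RC}^\bullet_\mu .$$ That is, every rational module $W$ is a finite direct sum, as $\mathfrak{sl}(2)$-modules, $W=W_{\mu_1}\oplus\cdots\oplus W_{\mu_r}$ with pairwise distinct $\mu_i\in\mathbb{C}$ and $W_{\mu_i}\in\mathcal{RC}^\bullet_{\mu_i}$, and $\mathrm{Hom}_{\mathfrak{sl}(2)}(A,B)=0$ whenever $A\in\mathcal{RC}^\bullet_\mu$, $B\in\mathcal{RC}^\bullet_\nu$ with $\mu\neq\nu$. This decomposition is compatible with the coproduct decomposition $\mathcal{RC}=\coprod_{\mu\in\mathbb{C}}\mathcal{RC}_\mu$ (i.e. $\mathcal{RC}_\mu\subseteq\mathcal{RC}^\bullet_\mu$ for each $\mu$).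
   Context: $\mathfrak{sl}(2)$ has basis $L_{-1}=f$, $L_0=-\tfrac12 h$, $L_1=-e$ for a Chevalley basis $e,f,h$ ($[e,f]=h$, $[h,e]=2e$, $[h,f]=-2f$). Every $\mathfrak{sl}(2)$-module $(V,\rho)$ is a $\mathbb{C}[z]$-module via $z\cdot v=\rho(L_0)v$, and has Casimir operator $C_\rho=\rho(L_0)(\rho(L_0)-1)-\rho(L_{-1})\rho(L_1)$. A rational module is an $\mathfrak{sl}(2)$-module whose $\mathbb{C}[z]$-module structure is that of a finite-dimensional $\mathbb{C}(z)$-vector space; $\mathcal R$ is the full subcategory of $\mathfrak{sl}(2)$-modules formed by rational modules. A module is Casimir of level $\mu$ if $C_\rho=\mu\,\mathrm{Id}$, and generalized Casimir of level $\mu$ if $(C_\rho-\mu)^n=0$ for some $n\ge1$. $\mathcal{RC}_\mu$ (resp. $\mathcal{RC}^\bullet_\mu$) is the full subcategory of $\mathcal R$ of Casimir (resp. generalized Casimir) rational modules of level $\mu$, and $\mathcal{RC}$ is the full subcategory of all rational Casimir modules (of any level). *)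

theory Defs
  imports Main "HOL-Computational_Algebra.Polynomial"
begin

text \<open>An sl(2)-module is given by a complex vector space (the ambient type 'v with a
  scalar multiplication s), a carrier subspace V, and the three operators
  Lm = rho(L_{-1}), Lz = rho(L_0), Lp = rho(L_1), which are linear on V, preserve V,
  and satisfy the Witt relations [L_m, L_n] = (m - n) L_{m+n}, i.e.
  [L_0,L_{-1}] = L_{-1}, [L_1,L_{-1}] = 2 L_0, [L_0,L_1] = - L_1
  (equivalent to the Chevalley relations via L_{-1}=f, L_0=-h/2, L_1=-e).\<close>

definition op_on :: "(complex \<Rightarrow> 'v::ab_group_add \<Rightarrow> 'v) \<Rightarrow> 'v set \<Rightarrow> ('v \<Rightarrow> 'v) \<Rightarrow> bool" where
  "op_on s V T \<longleftrightarrow> (\<forall>x\<in>V. T x \<in> V) \<and> (\<forall>x\<in>V. \<forall>y\<in>V. T (x + y) = T x + T y)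
     \<and> (\<forall>c. \<forall>x\<in>V. T (s c x) = s c (T x))"

definition sl2_module ::
  "(complex \<Rightarrow> 'v::ab_group_add \<Rightarrow> 'v) \<Rightarrow> 'v set \<Rightarrow> ('v \<Rightarrow> 'v) \<Rightarrow> ('v \<Rightarrow> 'v) \<Rightarrow> ('v \<Rightarrow> 'v) \<Rightarrow> bool" where
  "sl2_module s V Lm Lz Lp \<longleftrightarrow>
     Vector_Spaces.vector_space s \<and> module.subspace s V \<and>
     op_on s V Lm \<and> op_on s V Lz \<and> op_on s V Lp \<and>
     (\<forall>v\<in>V. Lz (Lm v) - Lm (Lz v) = Lm v) \<and>
     (\<forall>v\<in>V. Lp (Lm v) - Lm (Lp v) = s 2 (Lz v)) \<and>
     (\<forall>v\<in>V. Lz (Lp v) - Lp (Lz v) = - Lp v)"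

definition poly_op :: "(complex \<Rightarrow> 'v::ab_group_add \<Rightarrow> 'v) \<Rightarrow> ('v \<Rightarrow> 'v) \<Rightarrow> complex poly \<Rightarrow> 'v \<Rightarrow> 'v" where
  "poly_op s Lz p v = (\<Sum>i\<le>degree p. s (coeff p i) ((Lz ^^ i) v))"

text \<open>Rational module: the C[z]-module structure (z acting by rho(L_0)) is that of a
  finite-dimensional C(z)-vector space, i.e. every nonzero polynomial acts bijectively
  on V (so the action extends to C(z)) and V is spanned over C(z) by a finite set.\<close>
definition rational_module ::
  "(complex \<Rightarrow> 'v::ab_group_add \<Rightarrow> 'v) \<Rightarrow> 'v set \<Rightarrow> ('v \<Rightarrow> 'v) \<Rightarrow> ('v \<Rightarrow> 'v) \<Rightarrow> ('v \<Rightarrow> 'v) \<Rightarrow> bool" where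
  "rational_module s V Lm Lz Lp \<longleftrightarrow> sl2_module s V Lm Lz Lp \<and>
     (\<forall>p. p \<noteq> 0 \<longrightarrow> bij_betw (poly_op s Lz p) V V) \<and>
     (\<exists>S. finite S \<and> S \<subseteq> V \<and>
        (\<forall>v\<in>V. \<exists>q c. q \<noteq> 0 \<and> poly_op s Lz q v = (\<Sum>u\<in>S. poly_op s Lz (c u) u)))"

definition casimir :: "('v::ab_group_add \<Rightarrow> 'v) \<Rightarrow> ('v \<Rightarrow> 'v) \<Rightarrow> ('v \<Rightarrow> 'v) \<Rightarrow> 'v \<Rightarrow> 'v" where
  "casimir Lm Lz Lp v = Lz (Lz v) - Lz v - Lm (Lp v)"

definition casimir_level ::
  "(complex \<Rightarrow> 'v::ab_group_add \<Rightarrow> 'v) \<Rightarrow> 'v set \<Rightarrow> ('v \<Rightarrow> 'v) \<Rightarrow> ('v \<Rightarrow> 'v) \<Rightarrow> ('v \<Rightarrow> 'v) \<Rightarrow> complex \<Rightarrow> bool" where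
  "casimir_level s V Lm Lz Lp \<mu> \<longleftrightarrow> (\<forall>v\<in>V. casimir Lm Lz Lp v = s \<mu> v)"

definition gen_casimir_level ::
  "(complex \<Rightarrow> 'v::ab_group_add \<Rightarrow> 'v) \<Rightarrow> 'v set \<Rightarrow> ('v \<Rightarrow> 'v) \<Rightarrow> ('v \<Rightarrow> 'v) \<Rightarrow> ('v \<Rightarrow> 'v) \<Rightarrow> complex \<Rightarrow> bool" where
  "gen_casimir_level s V Lm Lz Lp \<mu> \<longleftrightarrow>
     (\<exists>n\<ge>1. \<forall>v\<in>V. ((\<lambda>w. casimir Lm Lz Lp w - s \<mu> w) ^^ n) v = 0)"

definition in_RC :: "(complex \<Rightarrow> 'v::ab_group_add \<Rightarrow> 'v) \<Rightarrow> 'v set \<Rightarrow> ('v \<Rightarrow> 'v) \<Rightarrow> ('v \<Rightarrow> 'v) \<Rightarrow> ('v \<Rightarrow> 'v) \<Rightarrow> complex \<Rightarrow> bool" where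
  "in_RC s V Lm Lz Lp \<mu> \<longleftrightarrow> rational_module s V Lm Lz Lp \<and> casimir_level s V Lm Lz Lp \<mu>"

definition in_RC_gen :: "(complex \<Rightarrow> 'v::ab_group_add \<Rightarrow> 'v) \<Rightarrow> 'v set \<Rightarrow> ('v \<Rightarrow> 'v) \<Rightarrow> ('v \<Rightarrow> 'v) \<Rightarrow> ('v \<Rightarrow> 'v) \<Rightarrow> complex \<Rightarrow> bool" where
  "in_RC_gen s V Lm Lz Lp \<mu> \<longleftrightarrow> rational_module s V Lm Lz Lp \<and> gen_casimir_level s V Lm Lz Lp \<mu>"

definition sl2_hom ::
  "(complex \<Rightarrow> 'a::ab_group_add \<Rightarrow> 'a) \<Rightarrow> 'a set \<Rightarrow> ('a \<Rightarrow> 'a) \<Rightarrow> ('a \<Rightarrow> 'a) \<Rightarrow> ('a \<Rightarrow> 'a) \<Rightarrow>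
   (complex \<Rightarrow> 'b::ab_group_add \<Rightarrow> 'b) \<Rightarrow> 'b set \<Rightarrow> ('b \<Rightarrow> 'b) \<Rightarrow> ('b \<Rightarrow> 'b) \<Rightarrow> ('b \<Rightarrow> 'b) \<Rightarrow>
   ('a \<Rightarrow> 'b) \<Rightarrow> bool" where
  "sl2_hom s V Lm Lz Lp t W Km Kz Kp f \<longleftrightarrow>
     (\<forall>x\<in>V. f x \<in> W) \<and> (\<forall>x\<in>V. \<forall>y\<in>V. f (x + y) = f x + f y) \<and>
     (\<forall>c. \<forall>x\<in>V. f (s c x) = t c (f x)) \<and>
     (\<forall>x\<in>V. f (Lm x) = Km (f x)) \<and> (\<forall>x\<in>V. f (Lz x) = Kz (f x)) \<and>
     (\<forall>x\<in>V. f (Lp x) = Kp (f x))"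

end

theory Submission
  imports Defs "HOL-Computational_Algebra.Computational_Algebra" "HOL-Library.Function_Algebras"
    "HOL-Computational_Algebra.Field_as_Ring"
begin

locale hev =
  fixes act :: "'c::comm_ring_1 \<Rightarrow> 'v::ab_group_add \<Rightarrow> 'v" and V :: "'v set" and T :: "'v \<Rightarrow> 'v"
  assumes V0: "0 \<in> V" and Vadd: "x \<in> V \<Longrightarrow> y \<in> V \<Longrightarrow> x + y \<in> V"
    and Vneg: "x \<in> V \<Longrightarrow> - x \<in> V"
    and act_V: "x \<in> V \<Longrightarrow> act a x \<in> V"
    and act_addl: "x \<in> V \<Longrightarrow> act (a + b) x = act a x + act b x"
    and act_addr: "x \<in> V \<Longrightarrow> y \<in> V \<Longrightarrow> act a (x + y) = act a x + act a y"
    and act_mult: "x \<in> V \<Longrightarrow> act (a * b) x = act a (act b x)"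
    and act_1: "x \<in> V \<Longrightarrow> act 1 x = x"
    and act_0: "x \<in> V \<Longrightarrow> act 0 x = 0"
    and T_V: "x \<in> V \<Longrightarrow> T x \<in> V"
    and T_add: "x \<in> V \<Longrightarrow> y \<in> V \<Longrightarrow> T (x + y) = T x + T y"
    and T_act: "x \<in> V \<Longrightarrow> T (act a x) = act a (T x)"
begin

definition gev :: "'c poly \<Rightarrow> 'v \<Rightarrow> 'v" where
  "gev P v = (\<Sum>k\<le>degree P. act (coeff P k) ((T ^^ k) v))"

lemma Vdiff: "x \<in> V \<Longrightarrow> y \<in> V \<Longrightarrow> x - y \<in> V"
  using Vadd[OF _ Vneg] by (metis diff_conv_add_uminus)

lemma Vsum: "(\<And>i. i \<in> I \<Longrightarrow> f i \<in> V) \<Longrightarrow> sum f I \<in> V"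
  by (induction I rule: infinite_finite_induct) (auto simp: V0 Vadd)

lemma Tpow_V: "x \<in> V \<Longrightarrow> (T ^^ k) x \<in> V"
  by (induction k) (auto simp: T_V)

lemma T_0: "T 0 = 0"
  using T_add[OF V0 V0] by simp

lemma T_sum: "(\<And>i. i \<in> I \<Longrightarrow> f i \<in> V) \<Longrightarrow> T (sum f I) = (\<Sum>i\<in>I. T (f i))"
  by (induction I rule: infinite_finite_induct) (auto simp: T_0 T_add Vsum)

lemma act_zero: "act a 0 = 0"
  using act_addr[OF V0 V0, of a] by simp

lemma act_sum: "(\<And>i. i \<in> I \<Longrightarrow> f i \<in> V) \<Longrightarrow> act a (sum f I) = (\<Sum>i\<in>I. act a (f i))"
  by (induction I rule: infinite_finite_induct) (auto simp: act_zero act_addr Vsum)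

lemma act_suml: "x \<in> V \<Longrightarrow> act (sum f I) x = (\<Sum>i\<in>I. act (f i) x)"
  by (induction I rule: infinite_finite_induct) (auto simp: act_0 act_addl)

lemma gev_bound: "degree P \<le> N \<Longrightarrow> x \<in> V \<Longrightarrow> gev P x = (\<Sum>k\<le>N. act (coeff P k) ((T ^^ k) x))"
  unfolding gev_def
  by (rule sum.mono_neutral_left) (auto simp: coeff_eq_0 act_0 Tpow_V)

lemma gev_V: "x \<in> V \<Longrightarrow> gev P x \<in> V"
  unfolding gev_def by (auto intro!: Vsum act_V Tpow_V)

lemma gev_pCons: "x \<in> V \<Longrightarrow> gev (pCons a P) x = act a x + T (gev P x)"
proof -
  assume x: "x \<in> V"
  have "gev (pCons a P) x = (\<Sum>k\<le>Suc (degree P). act (coeff (pCons a P) k) ((T ^^ k) x))"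
    using x by (intro gev_bound) (auto simp: degree_pCons_le)
  also have "\<dots> = act a x + (\<Sum>k\<le>degree P. act (coeff P k) ((T ^^ Suc k) x))"
    by (subst sum.atMost_Suc_shift) simp
  also have "(\<Sum>k\<le>degree P. act (coeff P k) ((T ^^ Suc k) x)) = T (gev P x)"
    unfolding gev_def using x by (subst T_sum) (auto simp: act_V Tpow_V T_act)
  finally show ?thesis .
qed

lemma gev_0: "x \<in> V \<Longrightarrow> gev 0 x = 0"
  by (simp add: gev_def act_0)

lemma gev_const: "x \<in> V \<Longrightarrow> gev [:a:] x = act a x"
  by (simp add: gev_def)

lemma gev_add: "x \<in> V \<Longrightarrow> gev (P + Q) x = gev P x + gev Q x"
proof -
  assume x: "x \<in> V"
  define N where "N = max (degree P) (degree Q)"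
  have "gev (P + Q) x = (\<Sum>k\<le>N. act (coeff (P + Q) k) ((T ^^ k) x))"
    using x by (intro gev_bound) (auto simp: N_def degree_add_le)
  also have "\<dots> = (\<Sum>k\<le>N. act (coeff P k) ((T ^^ k) x)) + (\<Sum>k\<le>N. act (coeff Q k) ((T ^^ k) x))"
    using x by (simp add: act_addl Tpow_V sum.distrib)
  also have "\<dots> = gev P x + gev Q x"
  proof -
    have "gev P x = (\<Sum>k\<le>N. act (coeff P k) ((T ^^ k) x))" "gev Q x = (\<Sum>k\<le>N. act (coeff Q k) ((T ^^ k) x))"
      using x by (auto intro!: gev_bound simp: N_def)
    then show ?thesis by simp
  qed
  finally show ?thesis .
qed

lemma gev_addr: "x \<in> V \<Longrightarrow> y \<in> V \<Longrightarrow> gev P (x + y) = gev P x + gev P y"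
proof (induction P)
  case 0 then show ?case by (simp add: gev_0 V0 Vadd)
next
  case (pCons a P)
  then show ?case
    by (simp add: gev_pCons Vadd act_addr gev_V T_add algebra_simps)
qed

lemma gev_zero: "gev P 0 = 0"
  using gev_addr[OF V0 V0, of P] by simp

lemma gev_neg: "x \<in> V \<Longrightarrow> gev P (- x) = - gev P x"
  using gev_addr[of x "-x" P] by (simp add: Vneg gev_zero eq_neg_iff_add_eq_0 add.commute)

lemma gev_diffr: "x \<in> V \<Longrightarrow> y \<in> V \<Longrightarrow> gev P (x - y) = gev P x - gev P y"
  by (metis diff_conv_add_uminus gev_addr gev_neg Vneg)

lemma gev_sumr: "(\<And>i. i \<in> I \<Longrightarrow> f i \<in> V) \<Longrightarrow> gev P (sum f I) = (\<Sum>i\<in>I. gev P (f i))"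
  by (induction I rule: infinite_finite_induct) (auto simp: gev_zero gev_addr Vsum)

lemma gev_act: "x \<in> V \<Longrightarrow> gev P (act a x) = act a (gev P x)"
proof (induction P)
  case 0 then show ?case by (simp add: gev_0 act_V act_zero)
next
  case (pCons b P)
  then show ?case
    by (simp add: gev_pCons act_V act_addr gev_V T_act T_V flip: act_mult) (simp add: mult.commute)
qed

lemma gev_smult: "x \<in> V \<Longrightarrow> gev (smult a P) x = act a (gev P x)"
proof (induction P)
  case 0 then show ?case by (simp add: gev_0 act_zero)
next
  case (pCons b P)
  then show ?case
    by (simp add: gev_pCons act_V act_addr gev_V T_act T_V act_mult)
qed

lemma gev_mult: "x \<in> V \<Longrightarrow> gev (P * Q) x = gev P (gev Q x)"
proof (induction P)
  case 0 then show ?case by (simp add: gev_0 gev_V)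
next
  case (pCons a P)
  then show ?case
    by (simp add: gev_pCons gev_add gev_smult gev_V gev_0 act_0 T_V)
qed

lemma gev_1: "x \<in> V \<Longrightarrow> gev 1 x = x"
  using gev_const[of x 1] by (simp add: act_1 one_pCons)

lemma gev_sum: "x \<in> V \<Longrightarrow> gev (sum F I) x = (\<Sum>i\<in>I. gev (F i) x)"
  by (induction I rule: infinite_finite_induct) (auto simp: gev_0 gev_add)

lemma gev_prod: "x \<in> V \<Longrightarrow> i \<in> I \<Longrightarrow> finite I \<Longrightarrow> gev (F i) x = 0 \<Longrightarrow> gev (prod F I) x = 0"
  by (simp add: prod.remove gev_mult mult.commute[of "F i"] gev_zero)

lemma gev_monom: "x \<in> V \<Longrightarrow> gev (monom a k) x = act a ((T ^^ k) x)"
proof (induction k arbitrary: x)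
  case 0 then show ?case by (simp add: gev_const monom_0)
next
  case (Suc k)
  have "gev (monom a (Suc k)) x = T (gev (monom a k) x)"
    using Suc by (simp add: monom_Suc gev_pCons act_0)
  then show ?case using Suc by (simp add: T_act Tpow_V funpow_swap1)
qed

lemma gev_X: "x \<in> V \<Longrightarrow> gev [:0, 1:] x = T x"
  by (simp add: gev_pCons act_0 gev_0 T_0 act_1 T_V)

lemma gev_comm:
  assumes R_V: "\<And>x. x \<in> V \<Longrightarrow> R x \<in> V" and R_add: "\<And>x y. x \<in> V \<Longrightarrow> y \<in> V \<Longrightarrow> R (x + y) = R x + R y"
    and R_act: "\<And>x a. x \<in> V \<Longrightarrow> R (act a x) = act a (R x)"
    and R_T: "\<And>x. x \<in> V \<Longrightarrow> R (T x) = T (R x)"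
    and x: "x \<in> V"
  shows "R (gev P x) = gev P (R x)"
  using x
proof (induction P)
  case 0
  have "R 0 = 0" using R_add[OF V0 V0] by simp
  then show ?case using 0 by (simp add: gev_0 R_V)
next
  case (pCons a P)
  then show ?case
    by (simp add: gev_pCons R_add act_V T_V gev_V R_act R_T R_V)
qed

end

locale sl2m =
  fixes s :: "complex \<Rightarrow> 'v::ab_group_add \<Rightarrow> 'v" and V :: "'v set"
    and Lm Lz Lp :: "'v \<Rightarrow> 'v"
  assumes sl2: "sl2_module s V Lm Lz Lp"
begin

lemma vs: "vector_space s" using sl2 by (simp add: sl2_module_def)

interpretation vector_space s by (rule vs)

lemma sub: "0 \<in> V" "x \<in> V \<Longrightarrow> y \<in> V \<Longrightarrow> x + y \<in> V" "x \<in> V \<Longrightarrow> s c x \<in> V"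
  using sl2 by (auto simp: sl2_module_def subspace_def)

lemma Vneg: "x \<in> V \<Longrightarrow> - x \<in> V"
  using sub(3)[of x "-1"] by simp

lemma Vdiff: "x \<in> V \<Longrightarrow> y \<in> V \<Longrightarrow> x - y \<in> V"
  using sub(2)[OF _ Vneg] by (metis diff_conv_add_uminus)

lemma opL: "op_on s V Lm" "op_on s V Lz" "op_on s V Lp"
  using sl2 by (auto simp: sl2_module_def)

lemma rel: "v \<in> V \<Longrightarrow> Lz (Lm v) - Lm (Lz v) = Lm v"
  "v \<in> V \<Longrightarrow> Lp (Lm v) - Lm (Lp v) = s 2 (Lz v)"
  "v \<in> V \<Longrightarrow> Lz (Lp v) - Lp (Lz v) = - Lp v"
  using sl2 by (auto simp: sl2_module_def)

lemma op_onD: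
  assumes "op_on s V T"
  shows "x \<in> V \<Longrightarrow> T x \<in> V" "x \<in> V \<Longrightarrow> y \<in> V \<Longrightarrow> T (x + y) = T x + T y"
    "x \<in> V \<Longrightarrow> T (s c x) = s c (T x)" "x \<in> V \<Longrightarrow> y \<in> V \<Longrightarrow> T (x - y) = T x - T y"
    "x \<in> V \<Longrightarrow> T (- x) = - T x" "T 0 = 0"
proof -
  have a: "x \<in> V \<Longrightarrow> y \<in> V \<Longrightarrow> T (x + y) = T x + T y" for x y using assms by (auto simp: op_on_def)
  have s: "x \<in> V \<Longrightarrow> T (s c x) = s c (T x)" for x c using assms by (auto simp: op_on_def)
  show "x \<in> V \<Longrightarrow> T x \<in> V" using assms by (auto simp: op_on_def)
  show "x \<in> V \<Longrightarrow> y \<in> V \<Longrightarrow> T (x + y) = T x + T y" by (rule a)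
  show "x \<in> V \<Longrightarrow> T (s c x) = s c (T x)" by (rule s)
  have n: "x \<in> V \<Longrightarrow> T (- x) = - T x" for x using s[of x "-1"] by simp
  show "x \<in> V \<Longrightarrow> T (- x) = - T x" by (rule n)
  show "x \<in> V \<Longrightarrow> y \<in> V \<Longrightarrow> T (x - y) = T x - T y" 
    using a[of x "-y"] Vneg n[of y] by simp
  show "T 0 = 0" using s[OF sub(1), of 0] by simp
qed

lemmas m = op_onD[OF opL(1)] and z = op_onD[OF opL(2)] and p = op_onD[OF opL(3)]

lemma mz: "x \<in> V \<Longrightarrow> Lm (Lz x) = Lz (Lm x) - Lm x"
  using rel(1)[of x] by (simp add: algebra_simps)
lemma pz: "x \<in> V \<Longrightarrow> Lp (Lz x) = Lz (Lp x) + Lp x"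
  using rel(3)[of x] by (simp add: algebra_simps)
lemma mp: "x \<in> V \<Longrightarrow> Lm (Lp x) = Lp (Lm x) - s 2 (Lz x)"
  using rel(2)[of x] by (simp add: algebra_simps)

definition Cas where "Cas = casimir Lm Lz Lp"

lemma Cas_def2: "Cas x = Lz (Lz x) - Lz x - Lp (Lm x) + s 2 (Lz x)" if "x \<in> V"
  using that by (simp add: Cas_def casimir_def mp)

lemma two: "s 2 x = x + x"
  using scale_left_distrib[of 1 1 x] by simp

lemmas VV = sub Vneg Vdiff

lemma Cas_V: "x \<in> V \<Longrightarrow> Cas x \<in> V"
  by (simp add: Cas_def2 VV m(1) z(1) p(1))

lemma op_Cas: "op_on s V Cas"
  unfolding op_on_def
  by (auto simp: Cas_V Cas_def2 VV m z p algebra_simps)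

lemmas c = op_onD[OF op_Cas]

lemma Cas_z: "x \<in> V \<Longrightarrow> Cas (Lz x) = Lz (Cas x)"
  by (simp add: Cas_def2 VV m z p mz pz two algebra_simps)

lemma Cas_m: "x \<in> V \<Longrightarrow> Cas (Lm x) = Lm (Cas x)"
  by (simp add: Cas_def2 VV m z p mz pz mp two algebra_simps)

lemma Cas_p: "x \<in> V \<Longrightarrow> Cas (Lp x) = Lp (Cas x)"
  by (simp add: Cas_def2 VV m z p mz pz mp two algebra_simps)

end

context sl2m begin

interpretation vector_space s by (rule vs)

lemma hev_op: "op_on s V T \<Longrightarrow> hev s V T"
  by unfold_locales (auto simp: VV op_onD scale_left_distrib scale_right_distrib)

sublocale Z: hev s V Lz by (rule hev_op[OF opL(2)])
sublocale C: hev s V Cas by (rule hev_op[OF op_Cas])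

lemma poly_op_Z: "poly_op s Lz = Z.gev"
  by (simp add: fun_eq_iff poly_op_def Z.gev_def)
lemma poly_op_C: "poly_op s Cas = C.gev"
  by (simp add: fun_eq_iff poly_op_def C.gev_def)

lemma Z_comm:
  assumes "op_on s V R" "\<And>x. x \<in> V \<Longrightarrow> R (Lz x) = Lz (R x)" "x \<in> V"
  shows "R (Z.gev p x) = Z.gev p (R x)"
  by (rule Z.gev_comm) (use assms op_onD[OF assms(1)] in auto)

lemma C_comm:
  assumes "op_on s V R" "\<And>x. x \<in> V \<Longrightarrow> R (Cas x) = Cas (R x)" "x \<in> V"
  shows "R (C.gev p x) = C.gev p (R x)"
  by (rule C.gev_comm) (use assms op_onD[OF assms(1)] in auto)

lemma op_Zgev: "op_on s V (Z.gev p)"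
  by (auto simp: op_on_def Z.gev_V Z.gev_addr Z.gev_act)
lemma op_Cgev: "op_on s V (C.gev p)"
  by (auto simp: op_on_def C.gev_V C.gev_addr C.gev_act)

sublocale O: hev "Z.gev" V Cas
proof unfold_locales
  fix x a assume "x \<in> V"
  then show "Cas (Z.gev a x) = Z.gev a (Cas x)"
    by (intro Z_comm[OF op_Cas]) (auto simp: Cas_z)
qed (auto simp: VV Z.gev_V Z.gev_add Z.gev_addr Z.gev_mult Z.gev_1 Z.gev_0 c)

lemma shift_Z:
  assumes R: "op_on s V R" and RZ: "\<And>x. x \<in> V \<Longrightarrow> R (Lz x) = Lz (R x) + s d (R x)" and x: "x \<in> V"
  shows "R (Z.gev p x) = Z.gev (pcompose p [:d, 1:]) (R x)"
  using x
proof (induction p)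
  case 0 then show ?case by (simp add: Z.gev_0 op_onD[OF R] )
next
  case (pCons a p)
  have Rx: "R x \<in> V" using pCons op_onD[OF R] by auto
  have "R (Z.gev (pCons a p) x) = s a (R x) + Lz (R (Z.gev p x)) + s d (R (Z.gev p x))"
    using pCons by (simp add: Z.gev_pCons op_onD[OF R] VV z Z.gev_V RZ add.assoc)
  also have "\<dots> = Z.gev (pcompose (pCons a p) [:d, 1:]) (R x)"
    using pCons Rx
    by (simp add: pcompose_pCons Z.gev_add Z.gev_const Z.gev_mult Z.gev_pCons Z.gev_0 Z.gev_V z(2) VV
        Z.gev_1 Z.gev_smult z(6) algebra_simps)
  finally show ?case .
qed

lemma shift_O:
  assumes R: "op_on s V R" and RZ: "\<And>x. x \<in> V \<Longrightarrow> R (Lz x) = Lz (R x) + s d (R x)" 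
    and RC: "\<And>x. x \<in> V \<Longrightarrow> R (Cas x) = Cas (R x)" and x: "x \<in> V"
  shows "R (O.gev P x) = O.gev (map_poly (\<lambda>p. pcompose p [:d, 1:]) P) (R x)"
  using x
proof (induction P)
  case 0 then show ?case by (simp add: O.gev_0 op_onD[OF R] )
next
  case (pCons a P)
  have Rx: "R x \<in> V" using pCons op_onD[OF R] by auto
  show ?case
    using pCons Rx
    by (simp add: O.gev_pCons map_poly_pCons op_onD[OF R] Z.gev_V O.gev_V c(1) shift_Z[OF R RZ] RC)
qed

lemma Lm_shift: "x \<in> V \<Longrightarrow> Lm (O.gev P x) = O.gev (map_poly (\<lambda>p. pcompose p [:-1, 1:]) P) (Lm x)"
  by (rule shift_O[OF opL(1)]) (auto simp: mz Cas_m algebra_simps)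

lemma Lp_shift: "x \<in> V \<Longrightarrow> Lp (O.gev P x) = O.gev (map_poly (\<lambda>p. pcompose p [:1, 1:]) P) (Lp x)"
  by (rule shift_O[OF opL(3)]) (auto simp: pz Cas_p)

end

definition fsc :: "'k::field \<Rightarrow> ('a \<Rightarrow> 'k) \<Rightarrow> ('a \<Rightarrow> 'k)" where "fsc c f = (\<lambda>x. c * f x)"

lemma vs_fsc: "vector_space (fsc :: 'k::field \<Rightarrow> ('a \<Rightarrow> 'k) \<Rightarrow> ('a \<Rightarrow> 'k))"
  by unfold_locales (auto simp: fsc_def fun_eq_iff algebra_simps)

lemma sum_fun_apply: "(sum g A) y = (\<Sum>x\<in>A. g x y)"
  by (induction A rule: infinite_finite_induct) auto

lemma dep_bound:
  fixes f :: "nat \<Rightarrow> 'a \<Rightarrow> 'k::field"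
  assumes S: "finite S" and supp: "\<And>k x. x \<notin> S \<Longrightarrow> f k x = 0" and N: "card S < N"
  shows "\<exists>a. (\<exists>k<N. a k \<noteq> 0) \<and> (\<forall>x. (\<Sum>k<N. a k * f k x) = 0)"
proof (cases "inj_on f {..<N}")
  case False
  then obtain i j where ij: "i < N" "j < N" "i \<noteq> j" "f i = f j"
    by (auto simp: inj_on_def)
  define a where "a = (\<lambda>k. if k = i then 1 else if k = j then -1 else (0::'k))"
  have "(\<Sum>k<N. a k * f k x) = 0" for x
  proof -
    have "(\<Sum>k<N. a k * f k x) = (\<Sum>k<N. (if k = i then f i x else 0) + (if k = j then - f j x else 0))"
      by (rule sum.cong) (auto simp: a_def ij)
    also have "\<dots> = 0" using ij by (simp add: sum.distrib)
    finally show ?thesis .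
  qed
  moreover have "a i \<noteq> 0" by (simp add: a_def)
  ultimately show ?thesis using ij by blast
next
  case True
  interpret VS: vector_space "fsc :: 'k \<Rightarrow> ('a \<Rightarrow> 'k) \<Rightarrow> ('a \<Rightarrow> 'k)" by (rule vs_fsc)
  define F where "F = f ` {..<N}"
  define \<delta> where "\<delta> = (\<lambda>(x::'a) (y::'a). if y = x then 1 else (0::'k))"
  have cF: "card F = N" using True by (simp add: F_def card_image)
  have sp: "F \<subseteq> VS.span (\<delta> ` S)"
  proof
    fix g assume "g \<in> F"
    then obtain k where g: "g = f k" by (auto simp: F_def)
    have "g = (\<Sum>x\<in>S. fsc (f k x) (\<delta> x))"
    proof
      fix y
      have "(\<Sum>x\<in>S. fsc (f k x) (\<delta> x)) y = (\<Sum>x\<in>S. f k x * \<delta> x y)"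
        by (simp add: sum_fun_apply fsc_def)
      also have "\<dots> = (\<Sum>x\<in>S. if y = x then f k y else 0)"
        by (rule sum.cong) (auto simp: \<delta>_def)
      also have "\<dots> = g y" using S supp by (auto simp: g)
      finally show "g y = (\<Sum>x\<in>S. fsc (f k x) (\<delta> x)) y" by simp
    qed
    also have "\<dots> \<in> VS.span (\<delta> ` S)"
      by (intro VS.span_sum VS.span_scale VS.span_base) auto
    finally show "g \<in> VS.span (\<delta> ` S)" .
  qed
  have "VS.dependent F"
  proof (rule ccontr)
    assume "VS.independent F"
    from VS.independent_span_bound[OF _ this sp] S have "card F \<le> card (\<delta> ` S)" by auto
    also have "\<dots> \<le> card S" using S by (rule card_image_le)
    finally show False using cF N by simp
  qed
  then obtain u where u: "\<exists>v\<in>F. u v \<noteq> 0" "(\<Sum>v\<in>F. fsc (u v) v) = 0"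
    using VS.dependent_finite[of F] by (auto simp: F_def)
  define a where "a = (\<lambda>k. u (f k))"
  have "(\<Sum>k<N. fsc (a k) (f k)) = (\<Sum>v\<in>F. fsc (u v) v)"
    unfolding F_def a_def using True by (simp add: sum.reindex)
  then have "(\<Sum>k<N. fsc (a k) (f k)) x = 0" for x
    using u(2) by simp
  then have "(\<Sum>k<N. a k * f k x) = 0" for x
    unfolding sum_fun_apply fsc_def .
  moreover have "\<exists>k<N. a k \<noteq> 0" using u(1) by (auto simp: F_def a_def)
  ultimately show ?thesis by blast
qed

lemma common_denom:
  fixes r :: "nat \<Rightarrow> 'a::idom fract"
  shows "finite A \<Longrightarrow> \<exists>D. D \<noteq> 0 \<and> (\<forall>k\<in>A. \<exists>n. r k = to_fract n / to_fract D)"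
proof (induction A rule: finite_induct)
  case empty then show ?case by (rule exI[of _ 1]) simp
next
  case (insert k A)
  then obtain D where D: "D \<noteq> 0" "\<forall>j\<in>A. \<exists>n. r j = to_fract n / to_fract D" by blast
  obtain a b where ab: "r k = Fract a b" "b \<noteq> 0" by (cases "r k") auto
  have "\<exists>n. r j = to_fract n / to_fract (D * b)" if jA: "j \<in> insert k A" for j
  proof (cases "j = k")
    case True
    then show ?thesis using ab D by (intro exI[of _ "a * D"]) (simp add: Fract_conv_to_fract)
  next
    case False
    then obtain n where "r j = to_fract n / to_fract D" using D jA False by auto
    then show ?thesis using ab D by (intro exI[of _ "n * b"]) simp
  qed
  then show ?case using D ab by (intro exI[of _ "D * b"]) auto
qed

locale ratm = sl2m +
  assumes rat: "rational_module s V Lm Lz Lp"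
begin

lemma bijZ: "p \<noteq> 0 \<Longrightarrow> bij_betw (Z.gev p) V V"
  using rat by (simp add: rational_module_def poly_op_Z)

lemma spanS: "\<exists>S. finite S \<and> S \<subseteq> V \<and>
        (\<forall>v\<in>V. \<exists>q c. q \<noteq> 0 \<and> Z.gev q v = (\<Sum>u\<in>S. Z.gev (c u) u))"
  using rat by (simp add: rational_module_def poly_op_Z)

lemma injZ: "p \<noteq> 0 \<Longrightarrow> x \<in> V \<Longrightarrow> Z.gev p x = 0 \<Longrightarrow> x = 0"
  using bijZ[of p] Z.gev_zero[of p] sub(1) by (metis bij_betw_def inj_onD)

lemma ann_one:
  assumes u: "u \<in> V"
  shows "\<exists>P. P \<noteq> 0 \<and> O.gev P u = 0"
proof -
  obtain S where S: "finite S" "S \<subseteq> V"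
    "\<forall>v\<in>V. \<exists>q c. q \<noteq> 0 \<and> Z.gev q v = (\<Sum>x\<in>S. Z.gev (c x) x)"
    using spanS by blast
  define N where "N = Suc (card S)"
  define w where "w = (\<lambda>k. (Cas ^^ k) u)"
  have wV: "w k \<in> V" for k using u by (simp add: w_def C.Tpow_V)
  have "\<forall>k. \<exists>q c. q \<noteq> 0 \<and> Z.gev q (w k) = (\<Sum>x\<in>S. Z.gev (c x) x)"
    using S(3) wV by blast
  then obtain q c where qc: "\<And>k. q k \<noteq> 0" "\<And>k. Z.gev (q k) (w k) = (\<Sum>x\<in>S. Z.gev (c k x) x)"
    by metis
  define f where "f = (\<lambda>k x. if x \<in> S then to_fract (c k x) / to_fract (q k) else 0)"
  obtain a where a: "\<exists>k<N. a k \<noteq> 0" "\<And>x. (\<Sum>k<N. a k * f k x) = 0"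
    using dep_bound[of S f N] S(1) by (auto simp: f_def N_def)
  obtain D where D: "D \<noteq> 0" "\<forall>k\<in>{..<N}. \<exists>n. a k / to_fract (q k) = to_fract n / to_fract D"
    using common_denom[of "{..<N}" "\<lambda>k. a k / to_fract (q k)"] by auto
  then obtain n where n: "\<And>k. k < N \<Longrightarrow> a k / to_fract (q k) = to_fract (n k) / to_fract D"
    by (metis lessThan_iff)
  have cz: "(\<Sum>k<N. n k * c k x) = 0" if x: "x \<in> S" for x
  proof -
    have "0 = (\<Sum>k<N. a k * f k x)" using a(2) by simp
    also have "\<dots> = (\<Sum>k<N. to_fract (n k * c k x) / to_fract D)"
    proof (rule sum.cong)
      fix k assume "k \<in> {..<N}"
      then have "a k * f k x = (a k / to_fract (q k)) * to_fract (c k x)" using x by (simp add: f_def)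
      also have "\<dots> = to_fract (n k * c k x) / to_fract D" using \<open>k \<in> {..<N}\<close> by (simp add: n)
      finally show "a k * f k x = to_fract (n k * c k x) / to_fract D" .
    qed simp
    also have "\<dots> = to_fract (\<Sum>k<N. n k * c k x) / to_fract D"
      by (simp add: sum_divide_distrib)
    finally have "to_fract (\<Sum>k<N. n k * c k x) = 0" using D by (simp del: to_fract_sum)
    then show ?thesis by (simp only: to_fract_eq_0_iff)
  qed
  define P where "P = (\<Sum>k<N. monom (n k * q k) k)"
  have "O.gev P u = (\<Sum>k<N. Z.gev (n k) (Z.gev (q k) (w k)))"
    unfolding P_def using u by (simp add: O.gev_sum O.gev_monom Z.gev_mult C.Tpow_V w_def)
  also have "\<dots> = (\<Sum>k<N. \<Sum>x\<in>S. Z.gev (n k * c k x) x)"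
    using S(2) by (intro sum.cong refl) (auto simp: qc Z.gev_sumr Z.gev_mult Z.gev_V subsetD)
  also have "\<dots> = (\<Sum>x\<in>S. Z.gev (\<Sum>k<N. n k * c k x) x)"
    using S(2) by (subst sum.swap) (intro sum.cong refl; auto simp: Z.gev_sum)
  also have "\<dots> = 0" using S(2) by (simp add: cz Z.gev_0 subset_iff)
  finally have ann: "O.gev P u = 0" .
  obtain k0 where k0: "k0 < N" "a k0 \<noteq> 0" using a(1) by blast
  have "n k0 \<noteq> 0" using n[OF k0(1)] k0(2) qc(1)[of k0] by auto
  then have "coeff P k0 \<noteq> 0"
    using k0 qc(1)[of k0] by (simp add: P_def coeff_sum coeff_monom)
  then have "P \<noteq> 0" by auto
  with ann show ?thesis by blast
qed

lemma ann_all: "\<exists>P. P \<noteq> 0 \<and> (\<forall>v\<in>V. O.gev P v = 0)"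
proof -
  obtain S where S: "finite S" "S \<subseteq> V"
    "\<forall>v\<in>V. \<exists>q c. q \<noteq> 0 \<and> Z.gev q v = (\<Sum>x\<in>S. Z.gev (c x) x)"
    using spanS by blast
  have "\<forall>u\<in>S. \<exists>P. P \<noteq> 0 \<and> O.gev P u = 0" using ann_one S(2) by blast
  then obtain Pu where Pu: "\<And>u. u \<in> S \<Longrightarrow> Pu u \<noteq> 0 \<and> O.gev (Pu u) u = 0" by metis
  define P where "P = (\<Prod>u\<in>S. Pu u)"
  have P0: "P \<noteq> 0" using Pu S(1) by (simp add: P_def)
  have PS: "O.gev P u = 0" if "u \<in> S" for u
    unfolding P_def using that S Pu[OF that] by (intro O.gev_prod[of u]) auto
  have "O.gev P v = 0" if v: "v \<in> V" for v
  proof -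
    obtain q c where qc: "q \<noteq> 0" "Z.gev q v = (\<Sum>x\<in>S. Z.gev (c x) x)" using S(3) v by blast
    have "Z.gev q (O.gev P v) = O.gev P (Z.gev q v)" using v by (simp add: O.gev_act)
    also have "\<dots> = (\<Sum>x\<in>S. Z.gev (c x) (O.gev P x))"
      using S(2) unfolding qc(2) by (subst O.gev_sumr) (auto simp: O.gev_act Z.gev_V subsetD intro!: sum.cong)
    also have "\<dots> = 0" using PS by (simp add: Z.gev_zero)
    finally show ?thesis using injZ[OF qc(1)] v O.gev_V by blast
  qed
  with P0 show ?thesis by blast
qed

end

lemma map_poly_add_hom:
  assumes "f 0 = 0" "\<And>a b. f (a + b) = f a + f b"
  shows "map_poly f (P + Q) = map_poly f P + map_poly f Q"
  by (rule poly_eqI) (simp add: coeff_map_poly assms)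

lemma map_poly_mult_hom:
  fixes f :: "'a::comm_ring_1 \<Rightarrow> 'b::comm_ring_1"
  assumes f0: "f 0 = 0" and fa: "\<And>a b. f (a + b) = f a + f b" and fm: "\<And>a b. f (a * b) = f a * f b"
  shows "map_poly f (P * Q) = map_poly f P * map_poly f Q"
proof (induction P)
  case 0 then show ?case by simp
next
  case (pCons a P)
  have "map_poly f (pCons a P * Q) = map_poly f (smult a Q) + map_poly f (pCons 0 (P * Q))"
    by (simp add: map_poly_add_hom[OF f0 fa])
  also have "\<dots> = smult (f a) (map_poly f Q) + pCons 0 (map_poly f P * map_poly f Q)"
    by (simp add: map_poly_smult f0 fm map_poly_pCons pCons.IH)
  also have "\<dots> = map_poly f (pCons a P) * map_poly f Q"
    by (simp add: map_poly_pCons f0)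
  finally show ?case .
qed

definition sig :: "complex poly \<Rightarrow> complex poly" where "sig p = pcompose p [:-1, 1:]"
definition tau :: "complex poly \<Rightarrow> complex poly" where "tau p = pcompose p [:1, 1:]"

lemma sig_tau: "sig (tau p) = p" "tau (sig p) = p"
  by (simp_all add: sig_def tau_def pcompose_assoc[symmetric] pcompose_pCons)

lemma sig_hom: "sig 0 = 0" "sig (a + b) = sig a + sig b" "sig (a * b) = sig a * sig b"
  "sig [:c:] = [:c:]"
  by (simp_all add: sig_def pcompose_add pcompose_mult)

lemma sig_eq0: "sig a = 0 \<longleftrightarrow> a = 0"
proof
  assume "sig a = 0"
  then have "tau (sig a) = tau 0" by simp
  then show "a = 0" by (simp only: sig_tau) (simp add: tau_def)
qed (simp add: sig_hom)

lemma sig_deg: "degree (sig p) = degree p"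
  by (simp add: sig_def degree_pcompose)

lemma sig_lead: "lead_coeff (sig p) = lead_coeff p"
  by (simp add: sig_def lead_coeff_comp)

lemma poly_sig: "poly (sig p) x = poly p (x - 1)"
  by (simp add: sig_def poly_pcompose)

lemma periodic_const:
  assumes "sig q = q"
  shows "q = [:coeff q 0:]"
proof -
  have per: "poly q (x - 1) = poly q x" for x using assms poly_sig[of q x] by simp
  have pn: "poly q (- of_nat n) = poly q 0" for n
  proof (induction n)
    case (Suc n)
    have "- of_nat (Suc n) = (- of_nat n) - (1::complex)" by simp
    then have "poly q (- of_nat (Suc n)) = poly q ((- of_nat n) - 1)" by (simp only:)
    also have "\<dots> = poly q (- of_nat n)" by (rule per)
    finally show ?case using Suc by simp
  qed simp
  define r where "r = q - [:poly q 0:]"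
  have "range (\<lambda>n::nat. - (of_nat n :: complex)) \<subseteq> {x. poly r x = 0}"
    using pn by (auto simp: r_def)
  moreover have "infinite (range (\<lambda>n::nat. - (of_nat n :: complex)))"
    by (rule range_inj_infinite) (auto simp: inj_def)
  ultimately have "infinite {x. poly r x = 0}" using finite_subset by blast
  then have "r = 0" using poly_roots_finite by blast
  then show ?thesis by (simp add: r_def poly_0_coeff_0)
qed

lemma shift_prop:
  fixes p l :: "complex poly"
  assumes l: "l \<noteq> 0" and eq: "sig p * l = p * sig l"
  shows "\<exists>c. p = smult c l"
proof -
  define g where "g = gcd p l"
  have g0: "g \<noteq> 0" using l by (simp add: g_def)
  obtain a b where ab: "p = a * g" "l = b * g" "coprime a b"
    using gcd_coprime_exists[of p l] g0 unfolding g_def by blast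
  have b0: "b \<noteq> 0" using l ab(2) by auto
  have sg0: "sig g \<noteq> 0" using g0 sig_eq0 by blast
  have sp: "sig p = sig a * sig g" by (simp add: ab(1) sig_hom(3))
  have sl: "sig l = sig b * sig g" by (simp add: ab(2) sig_hom(3))
  have "(sig a * b) * (sig g * g) = sig p * l"
    unfolding sp ab(2) by (simp add: algebra_simps)
  also have "\<dots> = p * sig l" by (rule eq)
  also have "\<dots> = (a * sig b) * (sig g * g)"
    unfolding sl ab(1) by (simp add: algebra_simps)
  finally have e0: "(sig a * b) * (sig g * g) = (a * sig b) * (sig g * g)" .
  have gg: "sig g * g \<noteq> 0" using g0 sg0 by simp
  have e: "sig a * b = a * sig b" using mult_right_cancel[OF gg] e0 by blast
  then have "b dvd a * sig b" using dvd_triv_right[of b "sig a"] by simp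
  then have "b dvd sig b" using ab(3) by (simp add: coprime_dvd_mult_right_iff coprime_commute)
  then obtain k where k: "sig b = b * k" by (elim dvdE)
  have k0: "k \<noteq> 0"
  proof
    assume "k = 0"
    then have "sig b = 0" using k by simp
    then show False using b0 sig_eq0 by blast
  qed
  have "degree (sig b) = degree b + degree k" using k b0 k0 by (simp add: degree_mult_eq)
  then have "degree k = 0" using sig_deg[of b] by simp
  then obtain \<kappa> where kk: "k = [:\<kappa>:]" by (metis degree_eq_zeroE)
  have "lead_coeff (sig b) = lead_coeff b" by (rule sig_lead)
  have "\<kappa> \<noteq> 0" using k0 kk by simp
  then have "\<kappa> * lead_coeff b = lead_coeff b" using \<open>lead_coeff (sig b) = lead_coeff b\<close>
    unfolding k kk by simp
  then have "\<kappa> = 1" using b0 by simp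
  then have sb: "sig b = b" using k kk by simp
  obtain \<beta> where bc: "b = [:\<beta>:]" using periodic_const[OF sb] by blast
  have "\<beta> \<noteq> 0" using b0 bc by auto
  have "sig a * b = a * b" using e sb by simp
  then have "sig a = a" using b0 by simp
  then obtain \<alpha> where ac: "a = [:\<alpha>:]" using periodic_const by blast
  have pg: "p = smult \<alpha> g" using ab(1) ac by simp
  have lg: "l = smult \<beta> g" using ab(2) bc by simp
  have "p = smult (\<alpha> / \<beta>) l" using \<open>\<beta> \<noteq> 0\<close> by (simp add: pg lg)
  then show ?thesis by blast
qed

lemma lin_fac1:
  fixes A B u :: "'k::field poly"
  assumes A0: "A \<noteq> 0" and B0: "B \<noteq> 0" and dAB: "degree A = degree B" and e1: "e1 \<noteq> 0"
    and r: "e0 + e1 * r = 0" and u: "B * [:e0, e1:] = A * u" and ur: "poly u r = 0"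
  shows "\<exists>c. B = smult c A"
proof -
  define L where "L = [:-r, 1:]"
  have L0: "L \<noteq> 0" by (simp add: L_def)
  have "e0 = - (e1 * r)" using r by (simp add: eq_neg_iff_add_eq_0)
  then have EL: "[:e0, e1:] = smult e1 L" by (simp add: L_def)
  have "L dvd u" using ur by (simp add: L_def poly_eq_0_iff_dvd)
  then obtain k where k: "u = L * k" by blast
  have P0: "[:e0, e1:] \<noteq> 0" using e1 by simp
  have "B * [:e0, e1:] \<noteq> 0" using B0 P0 by (rule no_zero_divisors)
  then have u0: "u \<noteq> 0" using u by auto
  have "degree (B * [:e0, e1:]) = degree B + degree [:e0, e1:]" by (rule degree_mult_eq[OF B0 P0])
  also have "degree [:e0, e1:] = 1" using e1 by simp
  finally have "degree (B * [:e0, e1:]) = degree B + 1" .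
  then have "degree u = 1" using u A0 u0 dAB by (simp add: degree_mult_eq)
  moreover have "k \<noteq> 0" using u0 k by auto
  moreover have "degree L = 1" by (simp add: L_def)
  ultimately have "degree k = 0" using k L0 by (simp add: degree_mult_eq)
  then obtain \<kappa> where kk: "k = [:\<kappa>:]" by (metis degree_eq_zeroE)
  have "smult e1 B * L = smult \<kappa> A * L" using u unfolding EL k kk by (simp add: algebra_simps)
  then have "smult e1 B = smult \<kappa> A" using mult_right_cancel[OF L0] by blast
  have "B = smult (1 / e1) (smult e1 B)" using e1 by simp
  also have "\<dots> = smult (\<kappa> / e1) A" using \<open>smult e1 B = smult \<kappa> A\<close> by simp
  finally have "B = smult (\<kappa> / e1) A" .
  then show ?thesis by blast
qed

lemma lin_fac:
  fixes A B E :: "'k::field poly"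
  assumes A0: "A \<noteq> 0" and B0: "B \<noteq> 0" and dAB: "degree A = degree B" and dE: "degree E = 1"
    and d1: "A dvd B * E" and d2: "B dvd A * E"
  shows "\<exists>c. B = smult c A"
proof -
  obtain u where u: "B * E = A * u" using d1 by blast
  obtain u' where u': "A * E = B * u'" using d2 by blast
  have "(A * B) * (E * E) = (B * E) * (A * E)" by (simp add: algebra_simps)
  also have "\<dots> = (A * u) * (B * u')" by (simp add: u u')
  also have "\<dots> = (A * B) * (u * u')" by (simp add: algebra_simps)
  finally have "(A * B) * (E * E) = (A * B) * (u * u')" .
  then have EE: "E * E = u * u'" using A0 B0 by simp
  define e0 e1 where "e0 = coeff E 0" and "e1 = coeff E 1"
  have "E \<noteq> 0" using dE by auto
  then have "coeff E (degree E) \<noteq> 0" by simp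
  then have e1: "e1 \<noteq> 0" using dE by (simp add: e1_def)
  have Ee: "E = [:e0, e1:]"
    by (rule poly_eqI) (auto simp: e0_def e1_def coeff_pCons coeff_eq_0 dE split: nat.splits)
  define r where "r = - e0 / e1"
  have r: "e0 + e1 * r = 0" using e1 by (simp add: r_def)
  have "poly E r = 0" using r by (simp add: Ee mult.commute)
  then have "poly (E * E) r = 0" by simp
  then have "poly u r * poly u' r = 0" using EE by simp
  then have "poly u r = 0 \<or> poly u' r = 0" by simp
  then show ?thesis
  proof
    assume "poly u r = 0"
    moreover have uu: "B * [:e0, e1:] = A * u" using u by (simp only: Ee)
    ultimately show ?thesis using lin_fac1[OF A0 B0 dAB e1 r uu] by blast
  next
    assume "poly u' r = 0"
    moreover have uu: "A * [:e0, e1:] = B * u'" using u' by (simp only: Ee)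
    ultimately obtain c where c: "A = smult c B" using lin_fac1[OF B0 A0 dAB[symmetric] e1 r uu] by blast
    then have "c \<noteq> 0" using A0 by auto
    then have "B = smult (1 / c) A" using c by simp
    then show ?thesis by blast
  qed
qed

lemma smult_dvd:
  fixes X Y Z :: "'k::field poly"
  assumes "smult c X = Y * Z" "c \<noteq> 0"
  shows "Y dvd X"
proof -
  have "X = smult (1 / c) (smult c X)" using assms(2) by simp
  also have "\<dots> = Y * smult (1 / c) Z" using assms(1) by simp
  finally show ?thesis by (rule dvdI)
qed

context ratm begin

interpretation vector_space s by (rule vs)

lemma Cas3: "Cas x = Lz (Lz x) - Lz x - Lm (Lp x)"
  by (simp add: Cas_def casimir_def)

definition Iset where "Iset = {P. \<forall>v\<in>V. O.gev P v = 0}"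

lemma I_mult: "P \<in> Iset \<Longrightarrow> Q * P \<in> Iset"
  by (simp add: Iset_def O.gev_mult O.gev_zero)

lemma I_smult: "P \<in> Iset \<Longrightarrow> smult c P \<in> Iset"
  by (simp add: Iset_def O.gev_smult O.act_zero)

lemma I_sub: "P \<in> Iset \<Longrightarrow> Q \<in> Iset \<Longrightarrow> P - Q \<in> Iset"
proof -
  assume "P \<in> Iset" "Q \<in> Iset"
  moreover have "P - Q = P + smult (-1) Q" by simp
  ultimately show ?thesis unfolding Iset_def
    by (auto simp only: O.gev_add O.gev_smult O.act_zero mem_Collect_eq add_0)
qed

lemma min_ann: "\<exists>m. m \<in> Iset \<and> m \<noteq> 0 \<and> (\<forall>P\<in>Iset. P \<noteq> 0 \<longrightarrow> degree m \<le> degree P)"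
proof -
  obtain P where "P \<noteq> 0" "P \<in> Iset" using ann_all by (auto simp: Iset_def)
  then show ?thesis
    using ex_has_least_nat[of "\<lambda>P. P \<in> Iset \<and> P \<noteq> 0" P degree] by blast
qed

lemma Ea: "v \<in> V \<Longrightarrow> O.gev [:[:0, -1, 1:], [:-1:]:] v = Lm (Lp v)"
  by (simp add: O.gev_pCons O.gev_0 Z.gev_pCons Z.gev_0 VV z Cas3 m(1) p(1) c(5) c(6) m(6) p(6) m p)

lemma Eb: "v \<in> V \<Longrightarrow> O.gev [:[:0, 1, 1:], [:-1:]:] v = Lp (Lm v)"
  by (simp add: O.gev_pCons O.gev_0 Z.gev_pCons Z.gev_0 VV z Cas3 m(1) p(1) c(5) c(6) m(6) p(6) m p
      mp two algebra_simps)


lemma divI: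
  assumes m: "m \<in> Iset" "m \<noteq> 0" "\<forall>P\<in>Iset. P \<noteq> 0 \<longrightarrow> degree m \<le> degree P"
    and P: "P \<in> Iset"
  shows "\<exists>c q. c \<noteq> 0 \<and> smult c P = m * q"
proof -
  obtain q r where qr: "pseudo_divmod P m = (q, r)" by (cases "pseudo_divmod P m") auto
  define c where "c = coeff m (degree m) ^ (Suc (degree P) - degree m)"
  have eq: "smult c P = m * q + r" and rd: "r = 0 \<or> degree r < degree m"
    using pseudo_divmod[OF m(2) qr] by (auto simp: c_def)
  have c0: "c \<noteq> 0" using m(2) by (simp add: c_def)
  have "r = smult c P - q * m" using eq by (simp add: algebra_simps)
  also have "\<dots> \<in> Iset" by (intro I_sub I_smult I_mult P m(1))
  finally have "r \<in> Iset" .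
  then have "r = 0" using rd m(3) by (auto simp: not_le[symmetric])
  then show ?thesis using eq c0 by auto
qed

lemma Sg_hom: "map_poly sig (P * Q) = map_poly sig P * map_poly sig Q"
  by (rule map_poly_mult_hom) (auto simp: sig_hom)

lemma Sg_Ta: "map_poly sig (map_poly tau P) = P"
  by (rule poly_eqI) (simp add: coeff_map_poly sig_hom tau_def sig_tau(1)[unfolded tau_def])

lemma Sg_smult: "map_poly sig (smult c P) = smult (sig c) (map_poly sig P)"
  by (rule map_poly_smult) (simp_all add: sig_hom)

lemma sig_b: "sig [:0, 1, 1:] = [:0, -1, 1:]"
  by (simp add: sig_def pcompose_pCons algebra_simps)

lemma ann_const: "\<exists>P0::complex poly. P0 \<noteq> 0 \<and> (\<forall>v\<in>V. C.gev P0 v = 0)"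
proof -
  obtain m where mm: "m \<in> Iset" "m \<noteq> 0" "\<forall>P\<in>Iset. P \<noteq> 0 \<longrightarrow> degree m \<le> degree P"
    using min_ann by blast
  define Ea :: "complex poly poly" where "Ea = [:[:0, -1, 1:], [:-1:]:]"
  define Eb :: "complex poly poly" where "Eb = [:[:0, 1, 1:], [:-1:]:]"
  define Sg where "Sg = map_poly sig"
  define Ta where "Ta = map_poly tau"
  have Lm_sh: "Lm (O.gev P x) = O.gev (Sg P) (Lm x)" if "x \<in> V" for P x
    using Lm_shift[OF that] by (simp add: Sg_def sig_def[abs_def])
  have Lp_sh: "Lp (O.gev P x) = O.gev (Ta P) (Lp x)" if "x \<in> V" for P x
    using Lp_shift[OF that] by (simp add: Ta_def tau_def[abs_def])
  have mI: "O.gev m v = 0" if "v \<in> V" for v using mm(1) that by (simp add: Iset_def)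
  have "Sg m * Ea \<in> Iset"
  proof -
    have "O.gev (Sg m * Ea) v = 0" if v: "v \<in> V" for v
    proof -
      have "O.gev (Sg m * Ea) v = O.gev (Sg m) (Lm (Lp v))"
        using v Ea[OF v] by (simp add: O.gev_mult Ea_def[symmetric])
      also have "\<dots> = Lm (O.gev m (Lp v))" using v by (simp add: Lm_sh p(1))
      also have "\<dots> = 0" using v by (simp add: mI p(1) m(6))
      finally show ?thesis .
    qed
    then show ?thesis by (simp add: Iset_def)
  qed
  then obtain c1 q1 where c1: "c1 \<noteq> 0" "smult c1 (Sg m * Ea) = m * q1" using divI[OF mm] by blast
  have "Ta m * Eb \<in> Iset"
  proof -
    have "O.gev (Ta m * Eb) v = 0" if v: "v \<in> V" for v
    proof -
      have "O.gev (Ta m * Eb) v = O.gev (Ta m) (Lp (Lm v))"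
        using v Eb[OF v] by (simp add: O.gev_mult Eb_def[symmetric])
      also have "\<dots> = Lp (O.gev m (Lm v))" using v by (simp add: Lp_sh m(1))
      also have "\<dots> = 0" using v by (simp add: mI m(1) p(6))
      finally show ?thesis .
    qed
    then show ?thesis by (simp add: Iset_def)
  qed
  then obtain c2 q2 where c2: "c2 \<noteq> 0" "smult c2 (Ta m * Eb) = m * q2" using divI[OF mm] by blast
  have "Sg (smult c2 (Ta m * Eb)) = Sg (m * q2)" using c2 by simp
  moreover have "Sg Eb = Ea"
    by (simp add: Sg_def Eb_def Ea_def map_poly_pCons sig_hom sig_b)
  moreover have "Sg (smult c2 (Ta m * Eb)) = smult (sig c2) (Sg (Ta m) * Sg Eb)"
    unfolding Sg_def by (simp only: Sg_smult Sg_hom)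
  moreover have "Sg (Ta m) = m" by (simp add: Sg_def Ta_def Sg_Ta)
  moreover have "Sg (m * q2) = Sg m * Sg q2" by (simp only: Sg_def Sg_hom)
  ultimately have c2': "smult (sig c2) (m * Ea) = Sg m * Sg q2" by simp
  have sc2: "sig c2 \<noteq> 0" using c2(1) sig_eq0 by blast
  define fm where "fm = fract_poly m"
  define fs where "fs = fract_poly (Sg m)"
  define fe where "fe = fract_poly Ea"
  have d1: "fm dvd fs * fe"
    using arg_cong[OF c1(2), of fract_poly] c1(1)
    by (intro smult_dvd[of "to_fract c1" _ _ "fract_poly q1"]) (simp_all add: fm_def fs_def fe_def)
  have d2: "fs dvd fm * fe"
    using arg_cong[OF c2', of fract_poly] sc2
    by (intro smult_dvd[of "to_fract (sig c2)" _ _ "fract_poly (Sg q2)"]) (simp_all add: fm_def fs_def fe_def)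
  have degS: "degree (Sg m) = degree m" unfolding Sg_def
    by (rule degree_map_poly) (simp add: sig_eq0)
  have Sm0: "Sg m \<noteq> 0" using mm(2) degS unfolding Sg_def
    by (metis (no_types, lifting) coeff_map_poly leading_coeff_0_iff sig_eq0 sig_hom(1))
  have fm0: "fm \<noteq> 0" using mm(2) by (simp add: fm_def)
  have fs0: "fs \<noteq> 0" using Sm0 by (simp add: fs_def)
  have dfe: "degree fe = 1" by (simp add: fe_def Ea_def degree_map_poly)
  have "degree fm = degree fs" by (simp add: fm_def fs_def degree_map_poly degS)
  from lin_fac[OF fm0 fs0 this dfe d1 d2] obtain \<kappa> where "fs = smult \<kappa> fm" by blast
  then obtain a b where ab: "smult a (Sg m) = smult b m" "coprime a b"
    unfolding fs_def fm_def by (elim fract_poly_smult_eqE) blast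
  have a0: "a \<noteq> 0"
  proof
    assume "a = 0"
    then have "b = 0" using ab(1) mm(2) by simp
    then show False using ab(2) \<open>a = 0\<close> by simp
  qed
  define n where "n = degree m"
  define l where "l = coeff m n"
  have l0: "l \<noteq> 0" using mm(2) by (simp add: l_def n_def)
  have cS: "coeff (Sg m) k = sig (coeff m k)" for k by (simp add: Sg_def coeff_map_poly sig_hom)
  have ck: "a * sig (coeff m k) = b * coeff m k" for k
    using arg_cong[OF ab(1), of "\<lambda>P. coeff P k"] by (simp add: cS)
  have "sig (coeff m k) * l = coeff m k * sig l" for k
  proof -
    have "a * (sig (coeff m k) * l) = (b * coeff m k) * l" using ck[of k] by (simp add: ac_simps)
    also have "\<dots> = coeff m k * (b * l)" by (simp add: ac_simps)
    also have "b * l = a * sig l" using ck[of n] by (simp add: l_def)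
    finally show ?thesis using a0 by (simp add: ac_simps)
  qed
  then have "\<forall>k. \<exists>c. coeff m k = smult c l" using shift_prop[OF l0] by blast
  then obtain lam where lam: "\<And>k. coeff m k = smult (lam k) l" by metis
  have "l = smult (lam n) l" using lam[of n] by (simp add: l_def)
  then have "smult (lam n - 1) l = 0" by (simp only: smult_diff_left smult_1_left diff_self)
  then have "lam n - 1 = 0" using l0 by (simp only: smult_eq_0_iff) blast
  then have lam1: "lam n = 1" by simp
  define M0 where "M0 = (\<Sum>k\<le>n. monom (lam k) k)"
  have cM: "coeff M0 k = (if k \<le> n then lam k else 0)" for k
    by (simp add: M0_def coeff_sum)
  have dM: "degree M0 \<le> n" using cM by (intro degree_le) auto
  have M00: "M0 \<noteq> 0" using cM[of n] lam1 by auto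
  have "C.gev M0 v = 0" if v: "v \<in> V" for v
  proof -
    have "O.gev m v = (\<Sum>k\<le>n. Z.gev (smult (lam k) l) ((Cas ^^ k) v))"
      by (simp add: O.gev_def n_def lam)
    also have "\<dots> = (\<Sum>k\<le>n. Z.gev l (s (lam k) ((Cas ^^ k) v)))"
      using v by (intro sum.cong refl) (simp add: Z.gev_smult Z.gev_act C.Tpow_V)
    also have "\<dots> = Z.gev l (\<Sum>k\<le>n. s (lam k) ((Cas ^^ k) v))"
      using v by (simp add: Z.gev_sumr VV C.Tpow_V)
    also have "(\<Sum>k\<le>n. s (lam k) ((Cas ^^ k) v)) = C.gev M0 v"
      using v dM by (simp add: C.gev_bound[OF dM] cM)
    finally have "Z.gev l (C.gev M0 v) = 0" using mI[OF v] by simp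
    then show ?thesis using injZ[OF l0] v C.gev_V by blast
  qed
  then show ?thesis using M00 by blast
qed

end

lemma (in hev) gev_diff: "x \<in> V \<Longrightarrow> gev (P - Q) x = gev P x - gev Q x"
  using gev_add[of x "P - Q" Q] by (simp add: algebra_simps)

lemma coprime_lin:
  fixes a b :: complex
  assumes "a \<noteq> b"
  shows "coprime [:-a, 1:] [:-b, 1:]"
proof (rule coprimeI)
  fix c assume "c dvd [:-a, 1:]" "c dvd [:-b, 1:]"
  then have "c dvd [:-a, 1:] - [:-b, 1:]" by (rule dvd_diff)
  moreover have "[:-a, 1:] - [:-b, 1:] = [:b - a:]" by simp
  moreover have "is_unit [:b - a:]" using assms by (simp add: is_unit_const_poly_iff dvd_field_iff)
  ultimately show "is_unit c" by (metis dvd_unit_imp_unit)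
qed

lemma coprime_linpow:
  fixes a b :: complex
  assumes "a \<noteq> b"
  shows "coprime ([:-a, 1:] ^ m) ([:-b, 1:] ^ n)"
  using coprime_lin[OF assms] by simp

lemma prod_dvd_coprime:
  fixes F :: "'i \<Rightarrow> complex poly"
  assumes "finite M" "\<And>i. i \<in> M \<Longrightarrow> F i dvd X"
    and "\<And>i j. i \<in> M \<Longrightarrow> j \<in> M \<Longrightarrow> i \<noteq> j \<Longrightarrow> coprime (F i) (F j)"
  shows "prod F M dvd X"
  using assms
proof (induction M rule: finite_induct)
  case empty then show ?case by simp
next
  case (insert x A)
  have "coprime (F x) (prod F A)"
    by (rule prod_coprime_right) (use insert in auto)
  then show ?case using insert by (simp add: divides_mult)
qed

context sl2m begin

interpretation vector_space s by (rule vs)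

lemma C_lin_pow: "v \<in> V \<Longrightarrow> ((\<lambda>w. casimir Lm Lz Lp w - s \<mu> w) ^^ n) v = C.gev ([:-\<mu>, 1:] ^ n) v"
proof (induction n)
  case 0 then show ?case by (simp add: C.gev_1)
next
  case (Suc n)
  have "C.gev ([:-\<mu>, 1:] ^ Suc n) v = C.gev [:-\<mu>, 1:] (C.gev ([:-\<mu>, 1:] ^ n) v)"
    by (simp only: power_Suc C.gev_mult Suc.prems)
  also have "\<dots> = Cas (C.gev ([:-\<mu>, 1:] ^ n) v) - s \<mu> (C.gev ([:-\<mu>, 1:] ^ n) v)"
    using Suc by (simp add: C.gev_pCons C.gev_0 c(6) C.gev_V)
  finally show ?case using Suc by (simp add: Cas_def)
qed

end

context ratm begin

interpretation vector_space s by (rule vs)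

lemma sub_rat:
  assumes W: "W = {v\<in>V. C.gev P v = 0}"
    and piW: "\<And>v. v \<in> V \<Longrightarrow> C.gev PI v \<in> W" and piid: "\<And>v. v \<in> W \<Longrightarrow> C.gev PI v = v"
  shows "rational_module s W Lm Lz Lp"
proof -
  have WV: "W \<subseteq> V" using W by auto
  have inW: "x \<in> W \<longleftrightarrow> x \<in> V \<and> C.gev P x = 0" for x using W by auto
  have Winv: "R x \<in> W" if R: "op_on s V R" "\<And>x. x \<in> V \<Longrightarrow> R (Cas x) = Cas (R x)" and x: "x \<in> W" for R x
  proof -
    have xV: "x \<in> V" using x inW by auto
    have "C.gev P (R x) = R (C.gev P x)" using C_comm[OF R xV] by simp
    also have "\<dots> = 0" using x inW op_onD(6)[OF R(1)] by simp
    finally show ?thesis using inW op_onD(1)[OF R(1) xV] by simp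
  qed
  have opW: "op_on s W R" if R: "op_on s V R" "\<And>x. x \<in> V \<Longrightarrow> R (Cas x) = Cas (R x)" for R
    unfolding op_on_def
  proof (intro conjI ballI allI)
    fix x assume x: "x \<in> W"
    show "R x \<in> W" by (rule Winv[OF R(1) R(2) x])
    have xV: "x \<in> V" using x WV by blast
    show "R (s c x) = s c (R x)" for c by (rule op_onD(3)[OF R(1) xV])
    fix y assume "y \<in> W"
    then have yV: "y \<in> V" using WV by blast
    show "R (x + y) = R x + R y" by (rule op_onD(2)[OF R(1) xV yV])
  qed
  have sub: "subspace W"
    unfolding subspace_def
  proof (intro conjI ballI allI)
    show "0 \<in> W" using inW sl2m.sub(1)[OF sl2m_axioms] C.gev_zero by blast
    fix x assume x: "x \<in> W"
    then have xV: "x \<in> V" and x0: "C.gev P x = 0" using inW by blast+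
    show "s c x \<in> W" for c
      using inW sl2m.sub(3)[OF sl2m_axioms xV] C.gev_act[OF xV] x0 scale_zero_right by metis
    fix y assume y: "y \<in> W"
    then have yV: "y \<in> V" and y0: "C.gev P y = 0" using inW by blast+
    show "x + y \<in> W"
      using inW sl2m.sub(2)[OF sl2m_axioms xV yV] C.gev_addr[OF xV yV] x0 y0 by simp
  qed
  have sl2W: "sl2_module s W Lm Lz Lp"
    unfolding sl2_module_def
  proof (intro conjI ballI)
    show "vector_space s" by (rule vs)
    show "subspace W" by (rule sub)
    show "op_on s W Lm" using opW[OF opL(1)] Cas_m by simp
    show "op_on s W Lz" using opW[OF opL(2)] Cas_z by simp
    show "op_on s W Lp" using opW[OF opL(3)] Cas_p by simp
    fix v assume "v \<in> W"
    then have v: "v \<in> V" using WV by blast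
    show "Lz (Lm v) - Lm (Lz v) = Lm v" by (rule rel(1)[OF v])
    show "Lp (Lm v) - Lm (Lp v) = s 2 (Lz v)" by (rule rel(2)[OF v])
    show "Lz (Lp v) - Lp (Lz v) = - Lp v" by (rule rel(3)[OF v])
  qed
  have bijW: "bij_betw (poly_op s Lz p) W W" if p: "p \<noteq> 0" for p
  proof -
    have RZ: "op_on s V (Z.gev p)" "\<And>x. x \<in> V \<Longrightarrow> Z.gev p (Cas x) = Cas (Z.gev p x)"
      using op_Zgev O.T_act by auto
    have inj: "inj_on (Z.gev p) W" using bijZ[OF p] WV by (meson bij_betw_def inj_on_subset)
    have "Z.gev p ` W = W"
    proof
      show "Z.gev p ` W \<subseteq> W" using Winv[OF RZ] by auto
      show "W \<subseteq> Z.gev p ` W"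
      proof
        fix w assume w: "w \<in> W"
        then obtain x where x: "x \<in> V" "w = Z.gev p x" using bijZ[OF p] WV
          by (metis bij_betw_def imageE subsetD)
        have "Z.gev p (C.gev P x) = C.gev P w"
          using C_comm[OF RZ(1) RZ(2) x(1)] x(2) by simp
        also have "\<dots> = 0" using w inW by simp
        finally have "C.gev P x = 0" using injZ[OF p] C.gev_V[OF x(1)] by blast
        then show "w \<in> Z.gev p ` W" using x inW by auto
      qed
    qed
    then show ?thesis using inj by (simp add: bij_betw_def poly_op_Z)
  qed
  obtain S where S: "finite S" "S \<subseteq> V"
    "\<forall>v\<in>V. \<exists>q c. q \<noteq> 0 \<and> Z.gev q v = (\<Sum>u\<in>S. Z.gev (c u) u)"
    using spanS by blast
  define S' where "S' = C.gev PI ` S"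
  have spanW: "\<exists>q c. q \<noteq> 0 \<and> poly_op s Lz q w = (\<Sum>u\<in>S'. poly_op s Lz (c u) u)" if w: "w \<in> W" for w
  proof -
    have wV: "w \<in> V" using w WV by auto
    obtain q c where qc: "q \<noteq> 0" "Z.gev q w = (\<Sum>u\<in>S. Z.gev (c u) u)" using S(3) wV by blast
    have "Z.gev q w = Z.gev q (C.gev PI w)" using piid[OF w] by simp
    also have "\<dots> = C.gev PI (Z.gev q w)" by (rule C_comm[OF op_Zgev]) (auto simp: O.T_act wV)
    also have "\<dots> = (\<Sum>u\<in>S. C.gev PI (Z.gev (c u) u))"
      unfolding qc(2) by (rule C.gev_sumr) (use S(2) in \<open>auto simp: Z.gev_V\<close>)
    also have "\<dots> = (\<Sum>u\<in>S. Z.gev (c u) (C.gev PI u))"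
    proof (rule sum.cong[OF refl])
      fix u assume "u \<in> S"
      then have uV: "u \<in> V" using S(2) by blast
      show "C.gev PI (Z.gev (c u) u) = Z.gev (c u) (C.gev PI u)"
        by (rule C_comm[OF op_Zgev, symmetric]) (auto simp: O.T_act uV)
    qed
    also have "\<dots> = (\<Sum>y\<in>S'. \<Sum>u | u \<in> S \<and> C.gev PI u = y. Z.gev (c u) (C.gev PI u))"
      unfolding S'_def using S(1) by (rule sum.image_gen)
    also have "\<dots> = (\<Sum>y\<in>S'. Z.gev (\<Sum>u | u \<in> S \<and> C.gev PI u = y. c u) y)"
    proof (rule sum.cong[OF refl])
      fix y assume "y \<in> S'"
      then have yV: "y \<in> V" using S(2) C.gev_V by (auto simp: S'_def)
      have "(\<Sum>u | u \<in> S \<and> C.gev PI u = y. Z.gev (c u) (C.gev PI u)) = (\<Sum>u | u \<in> S \<and> C.gev PI u = y. Z.gev (c u) y)"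
        by (rule sum.cong) auto
      also have "\<dots> = Z.gev (\<Sum>u | u \<in> S \<and> C.gev PI u = y. c u) y" using yV by (simp add: Z.gev_sum)
      finally show "(\<Sum>u | u \<in> S \<and> C.gev PI u = y. Z.gev (c u) (C.gev PI u)) = Z.gev (\<Sum>u | u \<in> S \<and> C.gev PI u = y. c u) y" .
    qed
    finally have "Z.gev q w = (\<Sum>y\<in>S'. Z.gev ((\<lambda>y. \<Sum>u | u \<in> S \<and> C.gev PI u = y. c u) y) y)" .
    then show ?thesis unfolding poly_op_Z using qc(1) by (intro exI conjI)
  qed
  have fS: "finite S'" using S(1) by (simp add: S'_def)
  have sS: "S' \<subseteq> W" unfolding S'_def using S(2) piW by blast
  show ?thesis unfolding rational_module_def
  proof (intro conjI allI impI)
    show "sl2_module s W Lm Lz Lp" by (rule sl2W)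
    fix p :: "complex poly" assume "p \<noteq> 0"
    then show "bij_betw (poly_op s Lz p) W W" by (rule bijW)
  next
    show "\<exists>S. finite S \<and> S \<subseteq> W \<and> (\<forall>v\<in>W. \<exists>q c. q \<noteq> 0 \<and> poly_op s Lz q v = (\<Sum>u\<in>S. poly_op s Lz (c u) u))"
      by (rule exI[of _ S']) (use fS sS spanW in blast)
  qed
qed

end

context ratm begin

interpretation vector_space s by (rule vs)

lemma decomp:
  "\<exists>(M :: complex set) (W :: complex \<Rightarrow> _ set). finite M \<and>
     (\<forall>\<mu>\<in>M. W \<mu> \<subseteq> V \<and> in_RC_gen s (W \<mu>) Lm Lz Lp \<mu>) \<and>
     (\<forall>v\<in>V. \<exists>w. (\<forall>\<mu>\<in>M. w \<mu> \<in> W \<mu>) \<and> v = (\<Sum>\<mu>\<in>M. w \<mu>)) \<and>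
     (\<forall>w w'. (\<forall>\<mu>\<in>M. w \<mu> \<in> W \<mu> \<and> w' \<mu> \<in> W \<mu>) \<and>
             (\<Sum>\<mu>\<in>M. w \<mu>) = (\<Sum>\<mu>\<in>M. w' \<mu>) \<longrightarrow> (\<forall>\<mu>\<in>M. w \<mu> = w' \<mu>))"
proof -
  obtain P0 :: "complex poly" where P0: "P0 \<noteq> 0" "\<And>v. v \<in> V \<Longrightarrow> C.gev P0 v = 0"
    using ann_const by blast
  define M where "M = {z. poly P0 z = 0}"
  define e where "e = (\<lambda>z. order z P0)"
  define F where "F = (\<lambda>z. [:-z, 1:] ^ e z)"
  define Q where "Q = (\<lambda>\<mu>. \<Prod>z\<in>M - {\<mu>}. F z)"
  have fM: "finite M" using P0(1) by (simp add: M_def poly_roots_finite)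
  have dec: "smult (lead_coeff P0) (prod F M) = P0"
    unfolding F_def e_def M_def by (rule complex_poly_decompose)
  have lc0: "lead_coeff P0 \<noteq> 0" using P0(1) by simp
  have PF: "prod F M = smult (1 / lead_coeff P0) P0"
    using dec lc0 by (metis smult_smult divide_inverse_commute field_class.field_inverse
        mult.commute smult_1_left)
  have PFV: "C.gev (prod F M) v = 0" if "v \<in> V" for v
    using that by (simp add: PF C.gev_smult P0(2) C.act_zero)
  have cop2: "coprime (F \<mu>) (F \<nu>)" if "\<mu> \<noteq> \<nu>" for \<mu> \<nu>
    unfolding F_def by (rule coprime_linpow[OF that])
  have cop: "coprime (Q \<mu>) (F \<mu>)" for \<mu>
    unfolding Q_def by (rule prod_coprime_left) (use cop2 in \<open>auto simp: coprime_commute\<close>)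
  define A where "A = (\<lambda>\<mu>. fst (bezout_coefficients (Q \<mu>) (F \<mu>)))"
  define B where "B = (\<lambda>\<mu>. snd (bezout_coefficients (Q \<mu>) (F \<mu>)))"
  have bez: "A \<mu> * Q \<mu> + B \<mu> * F \<mu> = 1" for \<mu>
    using bezout_coefficients_fst_snd[of "Q \<mu>" "F \<mu>"] cop[of \<mu>] by (simp add: A_def B_def)
  define W where "W = (\<lambda>\<mu>. {v\<in>V. C.gev (F \<mu>) v = 0})"
  define pr where "pr = (\<lambda>\<mu>. A \<mu> * Q \<mu>)"
  have WV: "W \<mu> \<subseteq> V" for \<mu> by (auto simp: W_def)
  have piid: "C.gev (pr \<mu>) v = v" if "v \<in> W \<mu>" for \<mu> v
  proof -
    have v: "v \<in> V" "C.gev (F \<mu>) v = 0" using that by (auto simp: W_def)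
    have "pr \<mu> = 1 - B \<mu> * F \<mu>" using bez[of \<mu>] by (simp add: pr_def algebra_simps)
    then show ?thesis using v by (simp add: C.gev_diff C.gev_1 C.gev_mult C.gev_zero)
  qed
  have pi0: "C.gev (pr \<mu>) v = 0" if "\<nu> \<in> M" "\<mu> \<noteq> \<nu>" "v \<in> W \<nu>" for \<mu> \<nu> v
  proof -
    have v: "v \<in> V" "C.gev (F \<nu>) v = 0" using that by (auto simp: W_def)
    have "F \<nu> dvd Q \<mu>" unfolding Q_def using fM that by (intro dvd_prodI) auto
    then obtain R where "Q \<mu> = F \<nu> * R" by blast
    then have "pr \<mu> = (A \<mu> * R) * F \<nu>" by (simp add: pr_def ac_simps)
    then show ?thesis using v by (simp add: C.gev_mult C.gev_zero)
  qed
  have piW: "C.gev (pr \<mu>) v \<in> W \<mu>" if "\<mu> \<in> M" "v \<in> V" for \<mu> v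
  proof -
    have "F \<mu> * pr \<mu> = A \<mu> * prod F M"
      using that fM by (simp add: pr_def Q_def prod.remove ac_simps)
    then have "C.gev (F \<mu>) (C.gev (pr \<mu>) v) = C.gev (A \<mu>) (C.gev (prod F M) v)"
      using that by (simp flip: C.gev_mult)
    also have "\<dots> = 0" using that by (simp add: PFV C.gev_zero)
    finally show ?thesis using that C.gev_V by (simp add: W_def)
  qed
  have sumpi: "(\<Sum>\<mu>\<in>M. C.gev (pr \<mu>) v) = v" if v: "v \<in> V" for v
  proof -
    define E where "E = (\<Sum>\<mu>\<in>M. pr \<mu>)"
    have "F \<mu> dvd E - 1" if \<mu>: "\<mu> \<in> M" for \<mu>
    proof -
      have "E - 1 = (pr \<mu> - 1) + (\<Sum>\<nu>\<in>M - {\<mu>}. pr \<nu>)"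
        using \<mu> fM by (simp add: E_def sum.remove)
      also have "pr \<mu> - 1 = - (B \<mu>) * F \<mu>" using bez[of \<mu>] by (simp add: pr_def algebra_simps)
      finally have E1: "E - 1 = - (B \<mu>) * F \<mu> + (\<Sum>\<nu>\<in>M - {\<mu>}. pr \<nu>)" .
      have "F \<mu> dvd pr \<nu>" if "\<nu> \<in> M - {\<mu>}" for \<nu>
        unfolding pr_def Q_def using that \<mu> fM by (intro dvd_mult dvd_prodI) auto
      then have "F \<mu> dvd (\<Sum>\<nu>\<in>M - {\<mu>}. pr \<nu>)" by (intro dvd_sum) auto
      then show ?thesis unfolding E1 by (intro dvd_add) auto
    qed
    then have "prod F M dvd E - 1" using fM cop2 by (intro prod_dvd_coprime) auto
    then obtain R where R: "E - 1 = prod F M * R" by blast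
    have "C.gev E v - v = C.gev (E - 1) v" using v by (simp add: C.gev_diff C.gev_1)
    also have "\<dots> = 0" using v by (simp add: R C.gev_mult C.gev_V PFV)
    finally show ?thesis using v by (simp add: E_def C.gev_sum)
  qed
  have proj: "C.gev (pr \<mu>) (\<Sum>\<nu>\<in>M. w \<nu>) = w \<mu>" if w: "\<forall>\<nu>\<in>M. w \<nu> \<in> W \<nu>" and \<mu>: "\<mu> \<in> M" for w \<mu>
  proof -
    have "C.gev (pr \<mu>) (\<Sum>\<nu>\<in>M. w \<nu>) = (\<Sum>\<nu>\<in>M. C.gev (pr \<mu>) (w \<nu>))"
      using w WV by (intro C.gev_sumr) blast
    also have "\<dots> = (\<Sum>\<nu>\<in>M. if \<nu> = \<mu> then w \<mu> else 0)"
      using w \<mu> by (intro sum.cong refl) (auto simp: piid pi0)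
    also have "\<dots> = w \<mu>" using fM \<mu> by simp
    finally show ?thesis .
  qed
  have rc: "in_RC_gen s (W \<mu>) Lm Lz Lp \<mu>" if \<mu>: "\<mu> \<in> M" for \<mu>
  proof -
    have "rational_module s (W \<mu>) Lm Lz Lp"
      by (rule sub_rat[of "W \<mu>" "F \<mu>" "pr \<mu>"]) (use piW[OF \<mu>] piid in \<open>auto simp: W_def\<close>)
    moreover have "e \<mu> \<ge> 1" using \<mu> P0(1) order_root[of P0 \<mu>] by (simp add: M_def e_def)
    moreover have "\<forall>v\<in>W \<mu>. ((\<lambda>w. casimir Lm Lz Lp w - s \<mu> w) ^^ e \<mu>) v = 0"
      using WV by (auto simp: C_lin_pow W_def F_def)
    ultimately show ?thesis unfolding in_RC_gen_def gen_casimir_level_def by blast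
  qed
  show ?thesis
  proof (rule exI[of _ M], rule exI[of _ W], intro conjI ballI allI impI)
    show "finite M" by (rule fM)
    fix \<mu> assume "\<mu> \<in> M"
    then show "W \<mu> \<subseteq> V" "in_RC_gen s (W \<mu>) Lm Lz Lp \<mu>" using WV rc by auto
  next
    fix v assume v: "v \<in> V"
    show "\<exists>w. (\<forall>\<mu>\<in>M. w \<mu> \<in> W \<mu>) \<and> v = (\<Sum>\<mu>\<in>M. w \<mu>)"
      by (rule exI[of _ "\<lambda>\<mu>. C.gev (pr \<mu>) v"]) (use piW v sumpi in auto)
  next
    fix w w' \<mu>
    assume h: "(\<forall>\<mu>\<in>M. w \<mu> \<in> W \<mu> \<and> w' \<mu> \<in> W \<mu>) \<and> (\<Sum>\<mu>\<in>M. w \<mu>) = (\<Sum>\<mu>\<in>M. w' \<mu>)"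
      and \<mu>: "\<mu> \<in> M"
    have "w \<mu> = C.gev (pr \<mu>) (\<Sum>\<nu>\<in>M. w \<nu>)" using h \<mu> proj[of w \<mu>] by auto
    also have "\<dots> = C.gev (pr \<mu>) (\<Sum>\<nu>\<in>M. w' \<nu>)" using h by simp
    also have "\<dots> = w' \<mu>" using h \<mu> proj[of w' \<mu>] by auto
    finally show "w \<mu> = w' \<mu>" .
  qed
qed

end

lemma ratm_intro: "rational_module s V Lm Lz Lp \<Longrightarrow> ratm s V Lm Lz Lp"
  by (intro ratm.intro sl2m.intro ratm_axioms.intro) (auto simp: rational_module_def)

lemma hom_orth:
  fixes s :: "complex \<Rightarrow> 'a::ab_group_add \<Rightarrow> 'a" and t :: "complex \<Rightarrow> 'b::ab_group_add \<Rightarrow> 'b"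
  assumes A: "in_RC_gen s A Lm Lz Lp \<mu>" and B: "in_RC_gen t B Km Kz Kp \<nu>" and ne: "\<mu> \<noteq> \<nu>"
    and f: "sl2_hom s A Lm Lz Lp t B Km Kz Kp f" and x: "x \<in> A"
  shows "f x = 0"
proof -
  interpret a: ratm s A Lm Lz Lp using A by (intro ratm_intro) (simp add: in_RC_gen_def)
  interpret b: ratm t B Km Kz Kp using B by (intro ratm_intro) (simp add: in_RC_gen_def)
  obtain n where n: "n \<ge> 1" "\<forall>v\<in>A. ((\<lambda>w. casimir Lm Lz Lp w - s \<mu> w) ^^ n) v = 0"
    using A by (auto simp: in_RC_gen_def gen_casimir_level_def)
  obtain k where k: "k \<ge> 1" "\<forall>v\<in>B. ((\<lambda>w. casimir Km Kz Kp w - t \<nu> w) ^^ k) v = 0"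
    using B by (auto simp: in_RC_gen_def gen_casimir_level_def)
  have fB: "y \<in> A \<Longrightarrow> f y \<in> B" for y using f by (simp add: sl2_hom_def)
  have fadd: "y \<in> A \<Longrightarrow> z \<in> A \<Longrightarrow> f (y + z) = f y + f z" for y z using f by (simp add: sl2_hom_def)
  have fsc: "y \<in> A \<Longrightarrow> f (s c y) = t c (f y)" for y c using f by (simp add: sl2_hom_def)
  have fL: "y \<in> A \<Longrightarrow> f (Lm y) = Km (f y)" "y \<in> A \<Longrightarrow> f (Lz y) = Kz (f y)" "y \<in> A \<Longrightarrow> f (Lp y) = Kp (f y)" for y
    using f by (auto simp: sl2_hom_def)
  have fdiff: "f (y - z) = f y - f z" if "y \<in> A" "z \<in> A" for y z
    using fadd[of "y - z" z] that a.Vdiff by simp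
  define g where "g = (\<lambda>w. casimir Lm Lz Lp w - s \<mu> w)"
  define h where "h = (\<lambda>w. casimir Km Kz Kp w - t \<mu> w)"
  have gA: "y \<in> A \<Longrightarrow> g y \<in> A" for y
    unfolding g_def using a.Cas_V a.sub(3) a.Vdiff by (simp add: a.Cas_def)
  have fg: "f (g y) = h (f y)" if y: "y \<in> A" for y
  proof -
    have "f (casimir Lm Lz Lp y) = casimir Km Kz Kp (f y)"
      unfolding casimir_def using y
      by (simp add: fdiff fL a.Vdiff a.z(1) a.m(1) a.p(1))
    then show ?thesis unfolding g_def h_def using y a.Cas_V[of y] a.sub(3)
      by (simp add: fdiff fsc a.Cas_def)
  qed
  have gpow: "(g ^^ j) y \<in> A \<and> f ((g ^^ j) y) = (h ^^ j) (f y)" if "y \<in> A" for j y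
    using that by (induction j) (auto simp: gA fg)
  define y where "y = f x"
  have yB: "y \<in> B" using fB x by (simp add: y_def)
  have y1: "b.C.gev ([:-\<mu>, 1:] ^ n) y = 0"
  proof -
    have "(h ^^ n) y = f ((g ^^ n) x)" using gpow[OF x] by (simp add: y_def)
    also have "\<dots> = f 0" using n(2) x by (simp add: g_def)
    also have "\<dots> = 0" using fadd[OF a.sub(1) a.sub(1)] by simp
    finally show ?thesis using b.C_lin_pow[OF yB] by (simp add: h_def)
  qed
  have y2: "b.C.gev ([:-\<nu>, 1:] ^ k) y = 0" using k(2) yB b.C_lin_pow[OF yB, of k \<nu>] by simp
  have cp: "coprime ([:-\<mu>, 1:] ^ n) ([:-\<nu>, 1:] ^ k)" by (rule coprime_linpow[OF ne])
  define F1 where "F1 = [:-\<mu>, 1:] ^ n"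
  define F2 where "F2 = [:-\<nu>, 1:] ^ k"
  have bz: "fst (bezout_coefficients F1 F2) * F1 + snd (bezout_coefficients F1 F2) * F2 = 1"
    using bezout_coefficients_fst_snd[of F1 F2] cp by (simp add: F1_def F2_def)
  have "y = b.C.gev 1 y" using yB by (simp add: b.C.gev_1)
  also have "\<dots> = 0"
    unfolding bz[symmetric] using yB y1 y2
    by (simp add: b.C.gev_add b.C.gev_mult b.C.gev_zero F1_def F2_def)
  finally show ?thesis by (simp add: y_def)
qed

lemma compat: "in_RC s V Lm Lz Lp \<mu> \<Longrightarrow> in_RC_gen s V Lm Lz Lp \<mu>"
  unfolding in_RC_def in_RC_gen_def casimir_level_def gen_casimir_level_def
  by (intro conjI; clarsimp) (rule exI[of _ 1]; simp)

theorem theorem6p8: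
  shows
    "(\<forall>(s :: complex \<Rightarrow> 'v::ab_group_add \<Rightarrow> 'v) V Lm Lz Lp.
        rational_module s V Lm Lz Lp \<longrightarrow>
        (\<exists>(M :: complex set) (W :: complex \<Rightarrow> 'v set). finite M \<and>
           (\<forall>\<mu>\<in>M. W \<mu> \<subseteq> V \<and> in_RC_gen s (W \<mu>) Lm Lz Lp \<mu>) \<and>
           (\<forall>v\<in>V. \<exists>w. (\<forall>\<mu>\<in>M. w \<mu> \<in> W \<mu>) \<and> v = (\<Sum>\<mu>\<in>M. w \<mu>)) \<and>
           (\<forall>w w'. (\<forall>\<mu>\<in>M. w \<mu> \<in> W \<mu> \<and> w' \<mu> \<in> W \<mu>) \<and>
                   (\<Sum>\<mu>\<in>M. w \<mu>) = (\<Sum>\<mu>\<in>M. w' \<mu>) \<longrightarrow> (\<forall>\<mu>\<in>M. w \<mu> = w' \<mu>))))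
     \<and>
    (\<forall>(s :: complex \<Rightarrow> 'a::ab_group_add \<Rightarrow> 'a) A Lm Lz Lp
       (t :: complex \<Rightarrow> 'b::ab_group_add \<Rightarrow> 'b) B Km Kz Kp \<mu> \<nu> f.
        in_RC_gen s A Lm Lz Lp \<mu> \<and> in_RC_gen t B Km Kz Kp \<nu> \<and> \<mu> \<noteq> \<nu> \<and>
        sl2_hom s A Lm Lz Lp t B Km Kz Kp f \<longrightarrow> (\<forall>x\<in>A. f x = 0))
     \<and>
    (\<forall>(s :: complex \<Rightarrow> 'v \<Rightarrow> 'v) V Lm Lz Lp \<mu>.
        in_RC s V Lm Lz Lp \<mu> \<longrightarrow> in_RC_gen s V Lm Lz Lp \<mu>)"
proof (intro conjI allI impI ballI)
  fix s :: "complex \<Rightarrow> 'v::ab_group_add \<Rightarrow> 'v" and V Lm Lz Lp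
  assume "rational_module s V Lm Lz Lp"
  then interpret ratm s V Lm Lz Lp by (rule ratm_intro)
  show "\<exists>(M :: complex set) (W :: complex \<Rightarrow> 'v set). finite M \<and>
           (\<forall>\<mu>\<in>M. W \<mu> \<subseteq> V \<and> in_RC_gen s (W \<mu>) Lm Lz Lp \<mu>) \<and>
           (\<forall>v\<in>V. \<exists>w. (\<forall>\<mu>\<in>M. w \<mu> \<in> W \<mu>) \<and> v = (\<Sum>\<mu>\<in>M. w \<mu>)) \<and>
           (\<forall>w w'. (\<forall>\<mu>\<in>M. w \<mu> \<in> W \<mu> \<and> w' \<mu> \<in> W \<mu>) \<and>
                   (\<Sum>\<mu>\<in>M. w \<mu>) = (\<Sum>\<mu>\<in>M. w' \<mu>) \<longrightarrow> (\<forall>\<mu>\<in>M. w \<mu> = w' \<mu>))"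
    by (rule decomp)
next
  fix s :: "complex \<Rightarrow> 'a::ab_group_add \<Rightarrow> 'a" and A Lm Lz Lp
    and t :: "complex \<Rightarrow> 'b::ab_group_add \<Rightarrow> 'b" and B Km Kz Kp \<mu> \<nu> f x
  assume "in_RC_gen s A Lm Lz Lp \<mu> \<and> in_RC_gen t B Km Kz Kp \<nu> \<and> \<mu> \<noteq> \<nu> \<and>
        sl2_hom s A Lm Lz Lp t B Km Kz Kp f" "x \<in> A"
  then show "f x = 0" using hom_orth by blast
next
  fix s :: "complex \<Rightarrow> 'v \<Rightarrow> 'v" and V Lm Lz Lp \<mu>
  assume "in_RC s V Lm Lz Lp \<mu>"
  then show "in_RC_gen s V Lm Lz Lp \<mu>" by (rule compat)
qed

end
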